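(* Let $(\Omega,+)$ be a group and $x,a,y,b,z$ subgroups of $\Omega$. Then: (1) $\Gamma(x,a,x,b,z)=\big((x\wedge a)+z\big)\wedge(x+b)=(x\wedge a)+\big(z\wedge(x+b)\big)$; (2) $\Gamma(x,a,y,b,a)=\Big(\big(x\wedge(a+y)\big)+b\Big)\wedge a=\Big(x+\big((y+a)\wedge b\big)\Big)\wedge a$; (3) $\Gamma(x,a,y,b,b)=\Big(\big(a+(y\wedge b)\big)\wedge x\Big)+b=\Big(a\wedge\big(x+(y\wedge b)\big)\Big)+b$. In particular, for all subgroups $x,a,y,b$: $\Gamma(x,a,x,b,x)=x$, $\Gamma(a,a,y,b,b)=a+b$ and $\Gamma(b,a,y,b,a)=a\wedge b$.
   Context: $(\Omega,+)$ is a group written additively but not necessarily abelian. For subsets $u,v$: $u\wedge v:=u\cap v$ and $u+v:=\{\mu+\nu:\mu\in u,\nu\in v\}$. $\Gamma(x,a,y,b,z)=\{\omega\in\Omega:\exists\alpha\in a,\beta\in b:\ \alpha+\omega+\beta\in y,\ \alpha+\omega\in z,\ \omega+\beta\in x\}$. *)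

theory Defs
  imports Main "HOL-Library.Set_Algebras"
begin

text \<open>Subgroups of an additively written (not necessarily abelian) group.
  Set sums u + v are the pointwise sums from HOL-Library.Set_Algebras.\<close>

definition add_subgroup :: "'a::group_add set \<Rightarrow> bool" where
  "add_subgroup H \<longleftrightarrow> 0 \<in> H \<and> (\<forall>u\<in>H. \<forall>v\<in>H. u + v \<in> H) \<and> (\<forall>u\<in>H. - u \<in> H)"

definition Gamma :: "'a::group_add set \<Rightarrow> 'a set \<Rightarrow> 'a set \<Rightarrow> 'a set \<Rightarrow> 'a set \<Rightarrow> 'a set" where
  "Gamma x a y b z = {\<omega>. \<exists>\<alpha>\<in>a. \<exists>\<beta>\<in>b. \<alpha> + \<omega> + \<beta> \<in> y \<and> \<alpha> + \<omega> \<in> z \<and> \<omega> + \<beta> \<in> x}"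

end

theory Submission
  imports Defs
begin

lemma sp: "w \<in> u + v \<longleftrightarrow> (\<exists>p\<in>u. \<exists>q\<in>v. w = p + q)"
  by (auto simp: set_plus_def)

lemma spI: "p \<in> u \<Longrightarrow> q \<in> v \<Longrightarrow> w = p + q \<Longrightarrow> w \<in> u + v"
  by (auto simp: set_plus_def)

lemma sg: assumes "add_subgroup H"
  shows "0 \<in> H" "p \<in> H \<Longrightarrow> q \<in> H \<Longrightarrow> p + q \<in> H" "p \<in> H \<Longrightarrow> - p \<in> H"
  using assms by (auto simp: add_subgroup_def)

lemma sgd: assumes "add_subgroup H" "p \<in> H" "q \<in> H" shows "p - q \<in> H" "- p + q \<in> H"
  using sg[OF assms(1)] assms(2,3) by (metis diff_conv_add_uminus)+

lemma eq1: assumes "add_subgroup x" "add_subgroup a" "add_subgroup b" "add_subgroup z"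
  shows "Gamma x a x b z = ((x \<inter> a) + z) \<inter> (x + b)"
proof (intro set_eqI iffI)
  fix w assume "w \<in> Gamma x a x b z"
  then obtain al be where h: "al \<in> a" "be \<in> b" "al + w + be \<in> x" "al + w \<in> z" "w + be \<in> x"
    by (auto simp: Gamma_def)
  have e: "(al + w + be) + - (w + be) = al" by (simp add: add.assoc minus_add diff_conv_add_uminus del: add_uminus_conv_diff)
  have ax: "al \<in> x" using sg(2)[OF assms(1) h(3) sg(3)[OF assms(1) h(5)]] e by simp
  have "w \<in> (x \<inter> a) + z"
    by (rule spI[OF IntI[OF sg(3)[OF assms(1) ax] sg(3)[OF assms(2) h(1)]] h(4)]) (simp add: add.assoc[symmetric])
  moreover have "w \<in> x + b"
    by (rule spI[OF h(5) sg(3)[OF assms(3) h(2)]]) (simp add: add.assoc)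
  ultimately show "w \<in> ((x \<inter> a) + z) \<inter> (x + b)" by blast
next
  fix w assume "w \<in> ((x \<inter> a) + z) \<inter> (x + b)"
  then obtain p q r s where h: "p \<in> x" "p \<in> a" "q \<in> z" "w = p + q" "r \<in> x" "s \<in> b" "w = r + s"
    by (auto simp: sp)
  have "- p + w + - s = - p + r" using h(7) by (metis add.assoc right_minus add.right_neutral)
  hence "- p + w + - s \<in> x" using sgd(2)[OF assms(1) h(1) h(5)] by simp
  moreover have "- p + w \<in> z" using h by (simp add: add.assoc[symmetric])
  moreover have "w + - s = r" using h(7) by (metis add.assoc right_minus add.right_neutral)
  hence "w + - s \<in> x" using h by simp
  ultimately show "w \<in> Gamma x a x b z" unfolding Gamma_def
    using sg(3)[OF assms(2) h(2)] sg(3)[OF assms(3) h(6)] by blast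
qed

lemma eq1b: assumes "add_subgroup x" "add_subgroup a" "add_subgroup b" "add_subgroup z"
  shows "((x \<inter> a) + z) \<inter> (x + b) = (x \<inter> a) + (z \<inter> (x + b))"
proof (intro set_eqI iffI)
  fix w assume "w \<in> ((x \<inter> a) + z) \<inter> (x + b)"
  then obtain p q r s where h: "p \<in> x" "p \<in> a" "q \<in> z" "w = p + q" "r \<in> x" "s \<in> b" "w = r + s"
    by (auto simp: sp)
  have "q = - p + w" using h by (simp add: add.assoc[symmetric])
  also have "\<dots> = (- p + r) + s" using h by (simp add: add.assoc)
  finally have E: "q = (- p + r) + s" .
  have TH: "q \<in> x + b" by (rule spI[OF sgd(2)[OF assms(1) h(1) h(5)] h(6) E])
  show "w \<in> (x \<inter> a) + (z \<inter> (x + b))" by (rule spI[OF IntI[OF h(1,2)] IntI[OF h(3) TH] h(4)])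
next
  fix w assume "w \<in> (x \<inter> a) + (z \<inter> (x + b))"
  then obtain p q r s where h: "p \<in> x" "p \<in> a" "q \<in> z" "w = p + q" "r \<in> x" "s \<in> b" "q = r + s"
    by (auto simp: sp)
  have "w = (p + r) + s" using h by (simp add: add.assoc)
  hence "w \<in> x + b" by (rule spI[OF sg(2)[OF assms(1) h(1) h(5)] h(6)])
  thus "w \<in> ((x \<inter> a) + z) \<inter> (x + b)" by (rule IntI[OF spI[OF IntI[OF h(1,2)] h(3) h(4)]])
qed

lemma eq2: assumes "add_subgroup x" "add_subgroup a" "add_subgroup y" "add_subgroup b"
  shows "Gamma x a y b a = ((x \<inter> (a + y)) + b) \<inter> a"
proof (intro set_eqI iffI)
  fix w assume "w \<in> Gamma x a y b a"
  then obtain al be where h: "al \<in> a" "be \<in> b" "al + w + be \<in> y" "al + w \<in> a" "w + be \<in> x"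
    by (auto simp: Gamma_def)
  have wa: "w \<in> a" using sgd(2)[OF assms(2) h(1) h(4)] by (simp add: add.assoc[symmetric])
  have ay: "w + be \<in> a + y"
    by (rule spI[OF sg(3)[OF assms(2) h(1)] h(3)]) (simp add: add.assoc[symmetric])
  show "w \<in> ((x \<inter> (a + y)) + b) \<inter> a"
    by (rule IntI[OF spI[OF IntI[OF h(5) ay] sg(3)[OF assms(4) h(2)]] wa]) (simp add: add.assoc)
next
  fix w assume "w \<in> ((x \<inter> (a + y)) + b) \<inter> a"
  then obtain p q r s where h: "p \<in> a" "q \<in> y" "r = p + q" "r \<in> x" "s \<in> b" "w = r + s" "w \<in> a"
    by (auto simp: sp)
  have "- p + w + - s \<in> y" using h by (simp add: add.assoc)
  moreover have "- p + w \<in> a" using sgd(2)[OF assms(2) h(1) h(7)] .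
  moreover have "w + - s = r" using h(6) by (metis add.assoc right_minus add.right_neutral)
  hence "w + - s \<in> x" using h by simp
  ultimately show "w \<in> Gamma x a y b a" unfolding Gamma_def
    using sg(3)[OF assms(2) h(1)] sg(3)[OF assms(4) h(5)] by blast
qed

lemma eq2b: assumes "add_subgroup x" "add_subgroup a" "add_subgroup y" "add_subgroup b"
  shows "((x \<inter> (a + y)) + b) \<inter> a = (x + ((y + a) \<inter> b)) \<inter> a"
proof (intro set_eqI iffI)
  fix w assume "w \<in> ((x \<inter> (a + y)) + b) \<inter> a"
  then obtain p q r s where h: "p \<in> a" "q \<in> y" "r = p + q" "r \<in> x" "s \<in> b" "w = r + s" "w \<in> a"
    by (auto simp: sp)
  have E: "s = - q + (- p + w)" using h by (simp add: add.assoc[symmetric])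
  have TH: "s \<in> y + a" by (rule spI[OF sg(3)[OF assms(3) h(2)] sgd(2)[OF assms(2) h(1) h(7)] E])
  show "w \<in> (x + ((y + a) \<inter> b)) \<inter> a" by (rule IntI[OF spI[OF h(4) IntI[OF TH h(5)] h(6)] h(7)])
next
  fix w assume "w \<in> (x + ((y + a) \<inter> b)) \<inter> a"
  then obtain p q r s where h: "r \<in> x" "q \<in> y" "p \<in> a" "s = q + p" "s \<in> b" "w = r + s" "w \<in> a"
    by (auto simp: sp)
  have "r = w + - s" using h by (simp add: add.assoc)
  also have "\<dots> = (w + - p) + - q" using h by (metis add.assoc minus_add)
  finally have E: "r = (w + - p) + - q" .
  have TH: "r \<in> a + y"
    by (rule spI[OF _ sg(3)[OF assms(3) h(2)] E]) (use sgd(1)[OF assms(2) h(7) h(3)] in simp)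
  show "w \<in> ((x \<inter> (a + y)) + b) \<inter> a" by (rule IntI[OF spI[OF IntI[OF h(1) TH] h(5) h(6)] h(7)])
qed

lemma eq3: assumes "add_subgroup x" "add_subgroup a" "add_subgroup y" "add_subgroup b"
  shows "Gamma x a y b b = ((a + (y \<inter> b)) \<inter> x) + b"
proof (intro set_eqI iffI)
  fix w assume "w \<in> Gamma x a y b b"
  then obtain al be where h: "al \<in> a" "be \<in> b" "al + w + be \<in> y" "al + w \<in> b" "w + be \<in> x"
    by (auto simp: Gamma_def)
  have yb: "al + w + be \<in> y \<inter> b" using sg(2)[OF assms(4) h(4) h(2)] h(3) by blast
  have ay: "w + be \<in> a + (y \<inter> b)"
    by (rule spI[OF sg(3)[OF assms(2) h(1)] yb]) (simp add: add.assoc[symmetric])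
  show "w \<in> ((a + (y \<inter> b)) \<inter> x) + b"
    by (rule spI[OF IntI[OF ay h(5)] sg(3)[OF assms(4) h(2)]]) (simp add: add.assoc)
next
  fix w assume "w \<in> ((a + (y \<inter> b)) \<inter> x) + b"
  then obtain p q r s where h: "p \<in> a" "q \<in> y" "q \<in> b" "r = p + q" "r \<in> x" "s \<in> b" "w = r + s"
    by (auto simp: sp)
  have e1: "w + - s = r" using h(7) by (metis add.assoc right_minus add.right_neutral)
  have e2: "- p + w = q + s" using h(4,7) by (simp add: add.assoc)
  have e3: "- p + w + - s = q" using e1 h(4) by (metis add.assoc left_minus add.left_neutral)
  have "- p + w + - s \<in> y" using e3 h by simp
  moreover have "- p + w \<in> b" using e2 sg(2)[OF assms(4) h(3) h(6)] by simp
  moreover have "w + - s \<in> x" using e1 h by simp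
  ultimately show "w \<in> Gamma x a y b b" unfolding Gamma_def
    using sg(3)[OF assms(2) h(1)] sg(3)[OF assms(4) h(6)] by blast
qed

lemma eq3b: assumes "add_subgroup x" "add_subgroup a" "add_subgroup y" "add_subgroup b"
  shows "((a + (y \<inter> b)) \<inter> x) + b = (a \<inter> (x + (y \<inter> b))) + b"
proof (intro set_eqI iffI)
  fix w assume "w \<in> ((a + (y \<inter> b)) \<inter> x) + b"
  then obtain p q r s where h: "p \<in> a" "q \<in> y" "q \<in> b" "r = p + q" "r \<in> x" "s \<in> b" "w = r + s"
    by (auto simp: sp)
  have "p = r + - q" using h by (simp add: add.assoc)
  hence "p \<in> x + (y \<inter> b)" using h sg(3)[OF assms(3) h(2)] sg(3)[OF assms(4) h(3)] by (intro spI[of r _ "- q"]) auto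
  moreover have "w = p + (q + s)" using h by (simp add: add.assoc)
  ultimately show "w \<in> (a \<inter> (x + (y \<inter> b))) + b"
    by (rule spI[OF IntI[OF h(1)] sg(2)[OF assms(4) h(3) h(6)]])
next
  fix w assume "w \<in> (a \<inter> (x + (y \<inter> b))) + b"
  then obtain p q r s where h: "p \<in> a" "r \<in> x" "q \<in> y" "q \<in> b" "p = r + q" "s \<in> b" "w = p + s"
    by (auto simp: sp)
  have "r = p + - q" using h by (simp add: add.assoc)
  hence "r \<in> a + (y \<inter> b)" using h sg(3)[OF assms(3) h(3)] sg(3)[OF assms(4) h(4)] by (intro spI[of p _ "- q"]) auto
  moreover have "w = r + (q + s)" using h by (simp add: add.assoc)
  ultimately show "w \<in> ((a + (y \<inter> b)) \<inter> x) + b"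
    by (rule spI[OF IntI[OF _ h(2)] sg(2)[OF assms(4) h(4) h(6)]])
qed

lemma eq4: assumes "add_subgroup x" "add_subgroup a" "add_subgroup b"
  shows "Gamma x a x b x = x"
proof (intro set_eqI iffI)
  fix w assume "w \<in> Gamma x a x b x"
  then obtain al be where h: "al \<in> a" "be \<in> b" "al + w + be \<in> x" "al + w \<in> x" "w + be \<in> x"
    by (auto simp: Gamma_def)
  have "al = (al + w + be) - (w + be)" by (simp add: algebra_simps)
  hence "al \<in> x" using sgd(1)[OF assms(1) h(3) h(5)] by simp
  hence "- al + (al + w) \<in> x" using sgd(2)[OF assms(1) _ h(4)] by blast
  thus "w \<in> x" by (simp add: add.assoc[symmetric])
next
  fix w assume "w \<in> x" thus "w \<in> Gamma x a x b x" unfolding Gamma_def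
    using sg(1)[OF assms(2)] sg(1)[OF assms(3)] by force
qed

lemma eq5: assumes "add_subgroup a" "add_subgroup y" "add_subgroup b"
  shows "Gamma a a y b b = a + b"
proof (intro set_eqI iffI)
  fix w assume "w \<in> Gamma a a y b b"
  then obtain al be where h: "al \<in> a" "be \<in> b" "w + be \<in> a"
    by (auto simp: Gamma_def)
  have "w = (w + be) + - be" by (simp add: add.assoc)
  thus "w \<in> a + b" using h sg(3)[OF assms(3)] by (intro spI[of "w + be" _ "- be"]) auto
next
  fix w assume "w \<in> a + b"
  then obtain p q where h: "p \<in> a" "q \<in> b" "w = p + q" by (auto simp: sp)
  have "- p + w + - q \<in> y" using h sg(1)[OF assms(2)] by (simp add: add.assoc)
  moreover have "- p + w \<in> b" using h by (simp add: add.assoc[symmetric])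
  moreover have "w + - q \<in> a" using h by (simp add: add.assoc)
  ultimately show "w \<in> Gamma a a y b b" unfolding Gamma_def
    using sg(3)[OF assms(1) h(1)] sg(3)[OF assms(3) h(2)] by blast
qed

lemma eq6: assumes "add_subgroup a" "add_subgroup y" "add_subgroup b"
  shows "Gamma b a y b a = a \<inter> b"
proof (intro set_eqI iffI)
  fix w assume "w \<in> Gamma b a y b a"
  then obtain al be where h: "al \<in> a" "be \<in> b" "al + w \<in> a" "w + be \<in> b"
    by (auto simp: Gamma_def)
  have "w \<in> a" using sgd(2)[OF assms(1) h(1) h(3)] by (simp add: add.assoc[symmetric])
  moreover have "w \<in> b" using sgd(1)[OF assms(3) h(4) h(2)] by (simp add: add.assoc)
  ultimately show "w \<in> a \<inter> b" by blast
next
  fix w assume h: "w \<in> a \<inter> b"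
  have "- w + w + 0 \<in> y" using sg(1)[OF assms(2)] by simp
  moreover have "- w + w \<in> a" using sg(1)[OF assms(1)] by simp
  moreover have "w + 0 \<in> b" using h by simp
  ultimately show "w \<in> Gamma b a y b a" unfolding Gamma_def
    using h sg(3)[OF assms(1)] sg(1)[OF assms(3)] by blast
qed

theorem theorem10p1:
  fixes x a y b z :: "'g::group_add set"
  assumes "add_subgroup x" and "add_subgroup a" and "add_subgroup y"
    and "add_subgroup b" and "add_subgroup z"
  shows "Gamma x a x b z = ((x \<inter> a) + z) \<inter> (x + b)
      \<and> ((x \<inter> a) + z) \<inter> (x + b) = (x \<inter> a) + (z \<inter> (x + b))
    \<and> Gamma x a y b a = ((x \<inter> (a + y)) + b) \<inter> a
      \<and> ((x \<inter> (a + y)) + b) \<inter> a = (x + ((y + a) \<inter> b)) \<inter> a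
    \<and> Gamma x a y b b = ((a + (y \<inter> b)) \<inter> x) + b
      \<and> ((a + (y \<inter> b)) \<inter> x) + b = (a \<inter> (x + (y \<inter> b))) + b
    \<and> Gamma x a x b x = x
    \<and> Gamma a a y b b = a + b
    \<and> Gamma b a y b a = a \<inter> b"
  by (intro conjI eq1 eq1b eq2 eq2b eq3 eq3b eq4 eq5 eq6 assms)

end
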